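(* Let $p$ be a prime and $h(x)\in\mathbb Z[x]$ with $d:=\deg_p h\ge1$. For every integer $m\ge1$, $$\#\{a\bmod p^m:\ h(a)\equiv0\pmod{p^m}\}\le d\cdot p^{m-\lceil m/d\rceil}.$$
   Context: $\deg_p h$ denotes the degree of the reduction of $h$ modulo $p$. *)

theory Defs
  imports "HOL-Computational_Algebra.Polynomial"
begin

definition deg_mod :: "int \<Rightarrow> int poly \<Rightarrow> nat" where
  "deg_mod p h = degree (map_poly (\<lambda>c. c mod p) h)"

end

theory Submission
  imports Defs
begin

lemma dvd_cancel_aux:
  fixes p x y :: int
  assumes "prime p" "p ^ t dvd x * y" "\<not> p ^ k dvd x"
  shows "p ^ (t - (k - 1)) dvd y"
  using assms(2,3)
proof (induction k arbitrary: x t)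
  case 0
  then show ?case by simp
next
  case (Suc k')
  show ?case
  proof (cases "p dvd x")
    case False
    then have "coprime (p ^ t) x"
      using assms(1) by (simp add: prime_imp_coprime coprime_commute)
    then have "p ^ t dvd y" using Suc.prems(1) coprime_dvd_mult_right_iff by blast
    then show ?thesis by (meson diff_le_self le_imp_power_dvd dvd_trans)
  next
    case True
    then obtain x' where x': "x = p * x'" by blast
    show ?thesis
    proof (cases t)
      case 0 then show ?thesis by simp
    next
      case (Suc t')
      have pnz: "p \<noteq> 0" using assms(1) by auto
      have "p * p ^ t' dvd p * (x' * y)" using Suc.prems(1) x' Suc by (simp add: mult.assoc)
      then have h1: "p ^ t' dvd x' * y" using pnz by simp
      have h2: "\<not> p ^ k' dvd x'" using Suc.prems(2) x' by (simp add: mult_dvd_mono)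
      have "k' \<noteq> 0" using h2 by (cases k') auto
      have "p ^ (t' - (k' - 1)) dvd y" using Suc.IH[OF h1 h2] .
      moreover have "t' - (k' - 1) = t - (Suc k' - 1)" using Suc \<open>k' \<noteq> 0\<close> by simp
      ultimately show ?thesis by simp
    qed
  qed
qed

lemma all_dvd_poly:
  fixes p a :: int
  assumes "\<forall>n. p dvd coeff h n"
  shows "p dvd poly h a"
proof -
  define h' where "h' = map_poly (\<lambda>c. c div p) h"
  have "h = smult p h'"
    by (rule poly_eqI) (use assms in \<open>simp add: h'_def coeff_map_poly\<close>)
  then show ?thesis by (metis poly_smult dvd_triv_left)
qed

lemma synth_coeffs:
  fixes p a :: int
  assumes "\<not> p dvd coeff h (Suc d)" "\<forall>n>Suc d. p dvd coeff h n"
  shows "\<not> p dvd coeff (synthetic_div h a) d \<and> (\<forall>n>d. p dvd coeff (synthetic_div h a) n)"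
proof -
  define q where "q = synthetic_div h a"
  have eq: "[:-a, 1:] * q + [:poly h a:] = h" unfolding q_def by (rule synthetic_div_correct')
  have c: "coeff h (Suc n) = coeff q n - a * coeff q (Suc n)" for n
  proof -
    have "coeff h (Suc n) = coeff ([:-a, 1:] * q + [:poly h a:]) (Suc n)" using eq by simp
    also have "\<dots> = coeff q n - a * coeff q (Suc n)"
      by (simp add: coeff_pCons algebra_simps)
    finally show ?thesis .
  qed
  have hi: "p dvd coeff q n" if "d < n" for n
  proof -
    have "n \<le> degree q + n + 1" by simp
    then show ?thesis using that
    proof (induction n rule: inc_induct)
      case base
      then show ?case by (simp add: coeff_eq_0)
    next
      case (step n)
      have "coeff q n = coeff h (Suc n) + a * coeff q (Suc n)" using c[of n] by simp
      moreover have "p dvd coeff h (Suc n)" using assms(2) step by simp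
      moreover have "p dvd coeff q (Suc n)" using step by simp
      ultimately show ?case by simp
    qed
  qed
  have "coeff q d = coeff h (Suc d) + a * coeff q (Suc d)" using c[of d] by simp
  moreover have "p dvd coeff q (Suc d)" using hi by simp
  ultimately have "\<not> p dvd coeff q d" using assms(1)
    by (metis dvd_add_left_iff dvd_mult)
  then show ?thesis using hi q_def by blast
qed

lemma key:
  fixes p :: int and h :: "int poly" and A :: "int set"
  assumes "prime p"
  shows "\<not> p dvd coeff h d \<Longrightarrow> \<forall>n>d. p dvd coeff h n \<Longrightarrow> finite A \<Longrightarrow> card A = Suc d
    \<Longrightarrow> (\<forall>x\<in>A. \<forall>y\<in>A. x \<noteq> y \<longrightarrow> \<not> p ^ k dvd (x - y)) \<Longrightarrow> d * (k - 1) < t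
    \<Longrightarrow> (\<forall>a\<in>A. p ^ t dvd poly h a) \<Longrightarrow> False"
proof (induction d arbitrary: h A t)
  case 0
  then obtain a where "A = {a}" by (metis One_nat_def card_1_singletonE)
  define r where "r = h - [:coeff h 0:]"
  have "\<forall>n. p dvd coeff r n"
    using 0(2) by (auto simp: r_def coeff_pCons split: nat.splits)
  then have "p dvd poly r a" by (rule all_dvd_poly)
  moreover have "poly h a = coeff h 0 + poly r a" by (simp add: r_def)
  moreover have "p dvd poly h a"
  proof -
    have "p ^ t dvd poly h a" using 0 \<open>A = {a}\<close> by simp
    moreover have "p dvd p ^ t" using 0(6) by (simp add: dvd_power)
    ultimately show ?thesis by (meson dvd_trans)
  qed
  ultimately have "p dvd coeff h 0" by (metis dvd_add_left_iff)
  then show False using 0(1) by simp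
next
  case (Suc d)
  from Suc.prems(3,4) obtain a0 where a0: "a0 \<in> A" by (metis card.empty ex_in_conv nat.distinct(1))
  define q where "q = synthetic_div h a0"
  define A' where "A' = A - {a0}"
  have qc: "\<not> p dvd coeff q d \<and> (\<forall>n>d. p dvd coeff q n)"
    unfolding q_def by (rule synth_coeffs) (use Suc.prems in auto)
  have cA': "card A' = Suc d" "finite A'" using Suc.prems a0 by (auto simp: A'_def)
  have pw: "\<forall>x\<in>A'. \<forall>y\<in>A'. x \<noteq> y \<longrightarrow> \<not> p ^ k dvd (x - y)" using Suc.prems(5) by (auto simp: A'_def)
  have lt: "d * (k - 1) < t - (k - 1)" using Suc.prems(6) by simp
  have dv: "\<forall>a\<in>A'. p ^ (t - (k - 1)) dvd poly q a"
  proof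
    fix a assume a: "a \<in> A'"
    have "poly h a = (a - a0) * poly q a + poly h a0"
      using arg_cong[OF synthetic_div_correct'[of a0 h], of "\<lambda>f. poly f a"]
      by (simp add: q_def algebra_simps)
    moreover have "p ^ t dvd poly h a" "p ^ t dvd poly h a0" using a a0 Suc.prems(7) by (auto simp: A'_def)
    ultimately have "p ^ t dvd (a - a0) * poly q a" by (metis dvd_add_left_iff)
    moreover have "\<not> p ^ k dvd (a - a0)" using a a0 Suc.prems(5) by (auto simp: A'_def)
    ultimately show "p ^ (t - (k - 1)) dvd poly q a" by (rule dvd_cancel_aux[OF assms])
  qed
  show False using Suc.IH[of q A' "t - (k - 1)"] qc cA' pw lt dv by blast
qed

theorem proposition2p2:
  fixes p :: int and h :: "int poly" and m :: nat
  assumes "prime p"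
    and "deg_mod p h \<ge> 1"
    and "m \<ge> 1"
  shows "real (card {a \<in> {0..<p ^ m}. p ^ m dvd poly h a})
           \<le> real (deg_mod p h) * real_of_int p ^ (m - nat \<lceil>real m / real (deg_mod p h)\<rceil>)"
proof -
  define d where "d = deg_mod p h"
  define k where "k = nat \<lceil>real m / real d\<rceil>"
  define S where "S = {a \<in> {0..<p ^ m}. p ^ m dvd poly h a}"
  have d1: "d \<ge> 1" using assms(2) d_def by simp
  have p1: "p > 1" using assms(1) prime_gt_1_int by blast
  define hb where "hb = map_poly (\<lambda>c. c mod p) h"
  have cb: "coeff hb n = coeff h n mod p" for n by (simp add: hb_def coeff_map_poly)
  have dhb: "degree hb = d" by (simp add: hb_def d_def deg_mod_def)
  have cd: "\<not> p dvd coeff h d"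
  proof -
    have "hb \<noteq> 0" using dhb d1 by auto
    then have "coeff hb d \<noteq> 0" using dhb by (metis leading_coeff_0_iff)
    then show ?thesis using cb by (simp add: dvd_eq_mod_eq_0)
  qed
  have chi: "\<forall>n>d. p dvd coeff h n"
    using cb dhb coeff_eq_0[of hb] by (metis dvd_eq_mod_eq_0)
  have mdpos: "real m / real d > 0" using d1 assms(3) by simp
  have k1: "k \<ge> 1" proof - have "\<lceil>real m / real d\<rceil> \<ge> 1" using mdpos by (simp only: one_le_ceiling) then show ?thesis unfolding k_def by linarith qed
  have "real m / real d \<le> real m" using d1 by (simp add: divide_le_eq mult_le_cancel_left1)
  then have km: "k \<le> m" unfolding k_def by (simp add: ceiling_le_iff nat_le_iff)
  have dk: "d * (k - 1) < m"
  proof -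
    have "\<lceil>real m / real d\<rceil> < real m / real d + 1" by linarith
    then have "real k - 1 < real m / real d" using k1 unfolding k_def by linarith
    then have "(real k - 1) * real d < real m" using d1 by (simp add: pos_less_divide_eq)
    then have "real (d * (k - 1)) < real m" using k1 by (simp add: of_nat_diff algebra_simps)
    then show ?thesis by linarith
  qed
  define f where "f = (\<lambda>a::int. a mod p ^ k)"
  have finS: "finite S" unfolding S_def by (rule finite_subset[of _ "{0..<p ^ m}"]) auto
  have imgd: "card (f ` S) \<le> d"
  proof (rule ccontr)
    assume "\<not> card (f ` S) \<le> d"
    then have "Suc d \<le> card (f ` S)" by simp
    then obtain B where B: "B \<subseteq> f ` S" "card B = Suc d" "finite B" by (rule obtain_subset_with_card_n)
    define g where "g = inv_into S f"
    have gS: "b \<in> f ` S \<Longrightarrow> g b \<in> S \<and> f (g b) = b" for b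
      by (simp add: g_def inv_into_into f_inv_into_f)
    have injg: "inj_on g B" using B(1) by (metis inj_on_subset inj_on_inv_into g_def)
    define A where "A = g ` B"
    have cA: "card A = Suc d" "finite A" using B injg by (auto simp: A_def card_image)
    have pw: "\<forall>x\<in>A. \<forall>y\<in>A. x \<noteq> y \<longrightarrow> \<not> p ^ k dvd (x - y)"
    proof (intro ballI impI)
      fix x y assume xy: "x \<in> A" "y \<in> A" "x \<noteq> y"
      then obtain b1 b2 where b: "b1 \<in> B" "b2 \<in> B" "x = g b1" "y = g b2" by (auto simp: A_def)
      then have "b1 \<noteq> b2" using xy by auto
      moreover have "f x = b1" "f y = b2" using gS b B(1) by auto
      ultimately have "x mod p ^ k \<noteq> y mod p ^ k" by (simp add: f_def)
      then show "\<not> p ^ k dvd (x - y)" by (simp add: mod_eq_dvd_iff)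
    qed
    have "\<forall>a\<in>A. p ^ m dvd poly h a" using gS B(1) by (auto simp: A_def S_def)
    then show False using key[OF assms(1) cd chi cA(2) cA(1) pw dk] by blast
  qed
  have fib: "card {a \<in> S. f a = b} \<le> nat (p ^ (m - k))" for b
  proof -
    have "inj_on (\<lambda>a. a div p ^ k) {a \<in> S. f a = b}"
    proof
      fix x y assume "x \<in> {a \<in> S. f a = b}" "y \<in> {a \<in> S. f a = b}" "x div p ^ k = y div p ^ k"
      then show "x = y" using div_mult_mod_eq[of x "p^k"] div_mult_mod_eq[of y "p^k"] by (auto simp: f_def)
    qed
    moreover have "(\<lambda>a. a div p ^ k) ` {a \<in> S. f a = b} \<subseteq> {0..<p ^ (m - k)}"
    proof
      fix z assume "z \<in> (\<lambda>a. a div p ^ k) ` {a \<in> S. f a = b}"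
      then obtain a where a: "a \<in> S" "z = a div p ^ k" by auto
      have pk: "p ^ k > 0" using p1 by simp
      have "p ^ m = p ^ k * p ^ (m - k)" using km by (simp add: power_add[symmetric])
      moreover have "0 \<le> a" "a < p ^ m" using a by (auto simp: S_def)
      ultimately have lt: "a < p ^ k * p ^ (m - k)" "0 \<le> a" by auto
      have "0 \<le> a div p ^ k" using pk lt by (simp add: pos_imp_zdiv_nonneg_iff)
      moreover have "p ^ k * (a div p ^ k) \<le> a"
      proof -
        have e: "p ^ k * (a div p ^ k) + a mod p ^ k = a" by (rule mult_div_mod_eq)
        have "0 \<le> a mod p ^ k" using pk by simp
        then show ?thesis using e by linarith
      qed
      then have "a div p ^ k < p ^ (m - k)" using lt pk
        by (smt (verit) mult_less_cancel_left)
      ultimately have "0 \<le> a div p ^ k" "a div p ^ k < p ^ (m - k)" by auto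
      then show "z \<in> {0..<p ^ (m - k)}" using a by simp
    qed
    ultimately have "card {a \<in> S. f a = b} \<le> card {0..<p ^ (m - k)}"
      by (metis card_inj_on_le finite_atLeastLessThan_int)
    then show ?thesis by simp
  qed
  have "card S \<le> (\<Sum>b\<in>f ` S. card {a \<in> S. f a = b})"
  proof -
    have "S = (\<Union>b\<in>f ` S. {a \<in> S. f a = b})" by auto
    then have "card S = card (\<Union>b\<in>f ` S. {a \<in> S. f a = b})" by simp
    also have "\<dots> \<le> (\<Sum>b\<in>f ` S. card {a \<in> S. f a = b})" by (rule card_UN_le) (simp add: finS)
    finally show ?thesis .
  qed
  also have "\<dots> \<le> card (f ` S) * nat (p ^ (m - k))"
    using sum_bounded_above[of "f ` S" "\<lambda>b. card {a \<in> S. f a = b}" "nat (p ^ (m - k))"] fib by simp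
  also have "\<dots> \<le> d * nat (p ^ (m - k))" using imgd by simp
  finally have "real (card S) \<le> real (d * nat (p ^ (m - k)))" by linarith
  also have "\<dots> = real d * real_of_int p ^ (m - k)" using p1 by simp
  finally show ?thesis by (simp add: S_def d_def k_def)
qed

end
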